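(* Let $I$ be an ideal on a cardinal $\kappa$ and $\theta<\kappa$ a regular cardinal. The following are equivalent: (1) $I$ is weakly $\theta$-saturated and $\theta$-indecomposable. (2) Whenever $\langle S_\alpha:\alpha<\kappa\rangle$ is a sequence of sets of ordinals with $|S_\alpha|<\theta$ for all $\alpha$, every $\leq$-increasing sequence $\langle h_i:i<\theta\rangle$ of functions in $\prod_{\alpha<\kappa}S_\alpha$ (i.e. $i<j$ implies $h_i(\alpha)\leq h_j(\alpha)$ for all $\alpha$) is eventually constant modulo $I$: there is $i^*<\theta$ with $\{\alpha: h_i(\alpha)\neq h_{i^*}(\alpha)\}\in I$ for all $i\geq i^*$.
   Context: By an ideal on a cardinal $\kappa$ we mean a proper ideal on $\kappa$ containing all bounded subsets of $\kappa$. $I$ is weakly $\theta$-saturated if there is no partition of $\kappa$ into $\theta$ pairwise disjoint sets not in $I$. $I$ is $\theta$-indecomposable if whenever $\langle A_i:i<\theta\rangle$ are subsets of $\kappa$ with $\bigcup_{i<\theta}A_i\notin I$, there is $w\subseteq\theta$ with $|w|<\theta$ and $\bigcup_{i\in w}A_i\notin I$. *)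

theory Defs
  imports Main
begin

unbundle cardinal_syntax

text \<open>A cardinal kappa is represented by a cardinal-order relation k (Card_order k);
  its elements (the ordinals below kappa) are the elements of Field k, ordered by k.\<close>

definition bounded_in :: "'a rel \<Rightarrow> 'a set \<Rightarrow> bool" where
  "bounded_in k A \<longleftrightarrow> (\<exists>\<beta>\<in>Field k. A \<subseteq> underS k \<beta>)"

definition ideal_on :: "'a rel \<Rightarrow> 'a set set \<Rightarrow> bool" where
  "ideal_on k I \<longleftrightarrow>
     I \<subseteq> Pow (Field k) \<and>
     {} \<in> I \<and>
     (\<forall>A\<in>I. \<forall>B. B \<subseteq> A \<longrightarrow> B \<in> I) \<and>
     (\<forall>A\<in>I. \<forall>B\<in>I. A \<union> B \<in> I) \<and>
     Field k \<notin> I \<and>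
     (\<forall>A. A \<subseteq> Field k \<and> bounded_in k A \<longrightarrow> A \<in> I)"

definition weakly_saturated :: "'a rel \<Rightarrow> 'b rel \<Rightarrow> 'a set set \<Rightarrow> bool" where
  "weakly_saturated k t I \<longleftrightarrow>
     \<not> (\<exists>A :: 'b \<Rightarrow> 'a set.
          (\<forall>i\<in>Field t. A i \<subseteq> Field k \<and> A i \<notin> I) \<and>
          (\<forall>i\<in>Field t. \<forall>j\<in>Field t. i \<noteq> j \<longrightarrow> A i \<inter> A j = {}) \<and>
          (\<Union>i\<in>Field t. A i) = Field k)"

definition indecomposable :: "'a rel \<Rightarrow> 'b rel \<Rightarrow> 'a set set \<Rightarrow> bool" where
  "indecomposable k t I \<longleftrightarrow>
     (\<forall>A :: 'b \<Rightarrow> 'a set.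
        (\<forall>i\<in>Field t. A i \<subseteq> Field k) \<and> (\<Union>i\<in>Field t. A i) \<notin> I \<longrightarrow>
        (\<exists>w \<subseteq> Field t. |w| <o t \<and> (\<Union>i\<in>w. A i) \<notin> I))"

end

theory Submission
  imports Defs
begin


context
  fixes t :: "'b rel"
  assumes tc: "Card_order t" and tinf: "cinfinite t" and treg: "regularCard t"
begin

lemma t_wo: "Well_order t" using tc by (simp add: card_order_on_def)

lemma t_refl: "a \<in> Field t \<Longrightarrow> (a,a) \<in> t"
  using t_wo by (auto simp: well_order_on_def linear_order_on_def partial_order_on_def preorder_on_def refl_on_def)

lemma t_trans: "(a,b) \<in> t \<Longrightarrow> (b,c) \<in> t \<Longrightarrow> (a,c) \<in> t"
  using t_wo by (auto simp: well_order_on_def linear_order_on_def partial_order_on_def preorder_on_def trans_def)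

lemma t_antisym: "(a,b) \<in> t \<Longrightarrow> (b,a) \<in> t \<Longrightarrow> a = b"
  using t_wo by (auto simp: well_order_on_def linear_order_on_def partial_order_on_def antisym_def)

lemma t_total: "a \<in> Field t \<Longrightarrow> b \<in> Field t \<Longrightarrow> (a,b) \<in> t \<or> (b,a) \<in> t"
  using t_wo t_refl unfolding well_order_on_def linear_order_on_def total_on_def by metis

lemma t_nomax: "a \<in> Field t \<Longrightarrow> \<exists>b\<in>Field t. a \<noteq> b \<and> (a,b) \<in> t"
  using Cinfinite_limit[of a t] tc tinf by (auto simp: cinfinite_def)

lemma t_bound: assumes "K \<subseteq> Field t" "|K| <o t" shows "\<exists>a\<in>Field t. \<forall>b\<in>K. (b,a) \<in> t"
proof -
  have "\<not> cofinal K t" using treg assms not_ordLess_ordIso unfolding regularCard_def by blast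
  then obtain a where a: "a \<in> Field t" "\<forall>b\<in>K. a = b \<or> (a,b) \<notin> t" unfolding cofinal_def by blast
  have "\<forall>b\<in>K. (b,a) \<in> t"
  proof
    fix b assume b: "b \<in> K"
    then have "b \<in> Field t" using assms by auto
    then show "(b,a) \<in> t" using a b t_refl t_total by metis
  qed
  then show ?thesis using a by blast
qed

lemma t_sbound: assumes "K \<subseteq> Field t" "|K| <o t" shows "\<exists>a\<in>Field t. \<forall>b\<in>K. (b,a) \<in> t \<and> b \<noteq> a"
proof -
  obtain a where a: "a \<in> Field t" "\<forall>b\<in>K. (b,a) \<in> t" using t_bound assms by blast
  obtain c where c: "c \<in> Field t" "a \<noteq> c" "(a,c) \<in> t" using t_nomax a by blast
  have "\<forall>b\<in>K. (b,c) \<in> t \<and> b \<noteq> c"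
  proof
    fix b assume "b \<in> K"
    then have ba: "(b,a) \<in> t" using a by blast
    then have "(b,c) \<in> t" using c t_trans by blast
    moreover have "b \<noteq> c"
    proof
      assume "b = c"
      then have "(c,a) \<in> t" using ba by simp
      then show False using c t_antisym by blast
    qed
    ultimately show "(b,c) \<in> t \<and> b \<noteq> c" by blast
  qed
  then show ?thesis using c by blast
qed

lemma t_under: assumes "a \<in> Field t" shows "|under t a| <o t"
proof -
  have "under t a = underS t a \<union> {a}" using assms t_refl by (auto simp: under_def underS_def)
  moreover have "|underS t a| <o t" by (rule card_of_underS[OF tc assms])
  moreover have "|{a}| <o t"
  proof -
    have "finite (Field |{a}| )" by (simp add: Field_card_of)
    moreover have "\<not> finite (Field t)" using tinf by (simp add: cinfinite_def)
    ultimately show ?thesis using finite_ordLess_infinite[OF card_of_Well_order t_wo] by blast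
  qed
  moreover have "\<not> finite (Field t)" using tinf by (simp add: cinfinite_def)
  ultimately show ?thesis using card_of_Un_ordLess_infinite_Field[OF _ tc, of "underS t a" "{a}"] by metis
qed

lemma t_small_le: assumes "|A| \<le>o |B|" "|B| <o t" shows "|A| <o t"
  using assms ordLeq_ordLess_trans by blast

lemma t_small_un: assumes "|A| <o t" "|B| <o t" shows "|A \<union> B| <o t"
  using card_of_Un_ordLess_infinite_Field[OF _ tc assms] tinf by (simp add: cinfinite_def)

end


context
  fixes t :: "'b rel"
  assumes tc: "Card_order t" and tinf: "cinfinite t" and treg: "regularCard t"
begin

lemma LA:
  fixes k :: "'a rel" and I :: "'a set set" and e :: "'b \<Rightarrow> 'o::wellorder" and g :: "'a \<Rightarrow> 'b"
  assumes einj: "inj_on e (Field t)" and emono: "\<forall>i j. (i,j)\<in>t \<longrightarrow> e i \<le> e j"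
  and H: "(\<forall>(S :: 'a \<Rightarrow> 'o set) (h :: 'b \<Rightarrow> 'a \<Rightarrow> 'o).
       (\<forall>\<alpha>\<in>Field k. |S \<alpha>| <o t) \<and>
       (\<forall>i\<in>Field t. \<forall>\<alpha>\<in>Field k. h i \<alpha> \<in> S \<alpha>) \<and>
       (\<forall>i\<in>Field t. \<forall>j\<in>Field t. (i, j) \<in> t \<and> i \<noteq> j \<longrightarrow>
          (\<forall>\<alpha>\<in>Field k. h i \<alpha> \<le> h j \<alpha>))
       \<longrightarrow>
       (\<exists>i0\<in>Field t. \<forall>i\<in>Field t. (i0, i) \<in> t \<longrightarrow>
          {\<alpha>\<in>Field k. h i \<alpha> \<noteq> h i0 \<alpha>} \<in> I))"
  and g: "\<forall>\<alpha>\<in>Field k. g \<alpha> \<in> Field t"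
  and Iclosed: "\<forall>A\<in>I. \<forall>B. B \<subseteq> A \<longrightarrow> B \<in> I"
  shows "\<exists>i0\<in>Field t. {\<alpha>\<in>Field k. (i0, g \<alpha>)\<in>t \<and> g \<alpha> \<noteq> i0} \<in> I"
proof -
  define tm where "tm i j = (if (i,j) \<in> t then i else j)" for i j
  define h where "h i \<alpha> = e (tm i (g \<alpha>))" for i \<alpha>
  define S where "S \<alpha> = (\<lambda>i. h i \<alpha>) ` Field t" for \<alpha>
  have tm_under: "tm i j \<in> under t j" if "j \<in> Field t" for i j
    using that t_refl[OF tc tinf treg] by (auto simp: tm_def under_def)
  have tm_mono: "(tm i j, tm i' j) \<in> t" if "(i,i') \<in> t" "j \<in> Field t" for i i' j
    using that t_refl[OF tc tinf treg] t_trans[OF tc tinf treg] by (auto simp: tm_def)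
  have c1: "\<forall>\<alpha>\<in>Field k. |S \<alpha>| <o t"
  proof
    fix \<alpha> assume a: "\<alpha> \<in> Field k"
    have "S \<alpha> \<subseteq> e ` under t (g \<alpha>)" using tm_under g a by (auto simp: S_def h_def)
    then have "|S \<alpha>| \<le>o |under t (g \<alpha>)|"
      by (rule ordLeq_transitive[OF card_of_mono1 card_of_image])
    then show "|S \<alpha>| <o t" using t_under[OF tc tinf treg, of "g \<alpha>"] g a ordLeq_ordLess_trans by blast
  qed
  have c2: "\<forall>i\<in>Field t. \<forall>\<alpha>\<in>Field k. h i \<alpha> \<in> S \<alpha>" by (auto simp: S_def)
  have c3: "\<forall>i\<in>Field t. \<forall>j\<in>Field t. (i, j) \<in> t \<and> i \<noteq> j \<longrightarrow>
          (\<forall>\<alpha>\<in>Field k. h i \<alpha> \<le> h j \<alpha>)"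
    using tm_mono emono g by (auto simp: h_def)
  obtain i0 where i0: "i0 \<in> Field t" "\<forall>i\<in>Field t. (i0, i) \<in> t \<longrightarrow>
          {\<alpha>\<in>Field k. h i \<alpha> \<noteq> h i0 \<alpha>} \<in> I"
    using H c1 c2 c3 by blast
  obtain i1 where i1: "i1 \<in> Field t" "i0 \<noteq> i1" "(i0,i1) \<in> t" using t_nomax[OF tc tinf treg] i0 by blast
  have "{\<alpha>\<in>Field k. (i0, g \<alpha>)\<in>t \<and> g \<alpha> \<noteq> i0} \<subseteq> {\<alpha>\<in>Field k. h i1 \<alpha> \<noteq> h i0 \<alpha>}"
  proof safe
    fix \<alpha> assume a: "\<alpha> \<in> Field k" "(i0, g \<alpha>) \<in> t" "g \<alpha> \<noteq> i0" "h i1 \<alpha> = h i0 \<alpha>"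
    have "tm i0 (g \<alpha>) = i0" using a by (simp add: tm_def)
    moreover have "tm i1 (g \<alpha>) \<in> Field t" "tm i1 (g \<alpha>) \<noteq> i0"
      using i1 a g by (auto simp: tm_def)
    ultimately show False using a(4) einj i0(1) by (auto simp: h_def inj_on_def)
  qed
  then show ?thesis using i0 i1 Iclosed by blast
qed

end


lemma Well_order_le: "Well_order {(x::'o::wellorder, y). x \<le> y}"
proof -
  let ?R = "{(x::'o, y). x \<le> y}"
  have F: "Field ?R = UNIV" by (auto simp: Field_def)
  have "?R - Id = {(x, y). x < y}" by auto
  then have "wf (?R - Id)" using wellorder_class.wf by simp
  moreover have "Linear_order ?R" unfolding F
    by (auto simp: linear_order_on_def partial_order_on_def preorder_on_def refl_on_def trans_def antisym_def total_on_def Field_def)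
  ultimately show ?thesis by (simp add: well_order_on_def)
qed

lemma embed_o:
  fixes t :: "'b rel" and k :: "'a rel"
  assumes "t <o k" "Card_order k" "|Field k| <o |UNIV::'o::wellorder set|"
  shows "\<exists>e::'b\<Rightarrow>'o. inj_on e (Field t) \<and> (\<forall>i j. (i,j)\<in>t \<longrightarrow> e i \<le> e j)"
proof -
  let ?R = "{(x::'o, y). x \<le> y}"
  have F: "Field ?R = UNIV" by (auto simp: Field_def)
  have "|UNIV::'o set| \<le>o ?R" using card_of_least Well_order_le F by metis
  moreover have "k \<le>o |Field k|" using assms(2) Card_order_iff_ordIso_card_of ordIso_iff_ordLeq by blast
  ultimately have "t \<le>o ?R" using assms ordLess_ordLeq_trans ordLess_transitive ordLess_imp_ordLeq by metis
  then obtain e where e: "embed t ?R e" and wt: "Well_order t" unfolding ordLeq_def by blast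
  have "inj_on e (Field t)" using embed_inj_on[OF wt e] .
  moreover have "\<forall>i j. (i,j)\<in>t \<longrightarrow> e i \<le> e j" using embed_compat[OF e] by (auto simp: compat_def)
  ultimately show ?thesis by blast
qed



lemma dir21:
  fixes k :: "'a rel" and t :: "'b rel" and I :: "'a set set"
  assumes kappa: "Card_order k"
    and ideal: "ideal_on k I"
    and tc: "Card_order t" and tinf: "cinfinite t"
    and treg: "regularCard t"
    and theta_less: "t <o k"
    and ordinals_big: "|Field k| <o |UNIV :: 'o::wellorder set|"
    and H: "(\<forall>(S :: 'a \<Rightarrow> 'o set) (h :: 'b \<Rightarrow> 'a \<Rightarrow> 'o).
       (\<forall>\<alpha>\<in>Field k. |S \<alpha>| <o t) \<and>
       (\<forall>i\<in>Field t. \<forall>\<alpha>\<in>Field k. h i \<alpha> \<in> S \<alpha>) \<and>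
       (\<forall>i\<in>Field t. \<forall>j\<in>Field t. (i, j) \<in> t \<and> i \<noteq> j \<longrightarrow>
          (\<forall>\<alpha>\<in>Field k. h i \<alpha> \<le> h j \<alpha>))
       \<longrightarrow>
       (\<exists>i0\<in>Field t. \<forall>i\<in>Field t. (i0, i) \<in> t \<longrightarrow>
          {\<alpha>\<in>Field k. h i \<alpha> \<noteq> h i0 \<alpha>} \<in> I))"
  shows "weakly_saturated k t I \<and> indecomposable k t I"
proof -
  obtain e :: "'b \<Rightarrow> 'o" where einj: "inj_on e (Field t)" and emono: "\<forall>i j. (i,j)\<in>t \<longrightarrow> e i \<le> e j"
    using embed_o[OF theta_less kappa ordinals_big] by blast
  have Icl: "\<forall>A\<in>I. \<forall>B. B \<subseteq> A \<longrightarrow> B \<in> I" and Iun: "\<forall>A\<in>I. \<forall>B\<in>I. A \<union> B \<in> I"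
    using ideal by (auto simp: ideal_on_def)
  note LA' = LA[OF tc tinf treg einj emono H _ Icl]
  have ws: "weakly_saturated k t I"
    unfolding weakly_saturated_def
  proof
    assume "\<exists>A :: 'b \<Rightarrow> 'a set.
          (\<forall>i\<in>Field t. A i \<subseteq> Field k \<and> A i \<notin> I) \<and>
          (\<forall>i\<in>Field t. \<forall>j\<in>Field t. i \<noteq> j \<longrightarrow> A i \<inter> A j = {}) \<and>
          (\<Union>i\<in>Field t. A i) = Field k"
    then obtain A :: "'b \<Rightarrow> 'a set" where A1: "\<forall>i\<in>Field t. A i \<subseteq> Field k \<and> A i \<notin> I"
      and A2: "\<forall>i\<in>Field t. \<forall>j\<in>Field t. i \<noteq> j \<longrightarrow> A i \<inter> A j = {}"
      and A3: "(\<Union>i\<in>Field t. A i) = Field k" by blast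
    define g where "g \<alpha> = (SOME i. i \<in> Field t \<and> \<alpha> \<in> A i)" for \<alpha>
    have gA: "g \<alpha> \<in> Field t \<and> \<alpha> \<in> A (g \<alpha>)" if "\<alpha> \<in> Field k" for \<alpha>
    proof -
      have "\<exists>i. i \<in> Field t \<and> \<alpha> \<in> A i" using A3 that by blast
      then show ?thesis unfolding g_def by (rule someI_ex)
    qed
    obtain i0 where i0: "i0 \<in> Field t" "{\<alpha>\<in>Field k. (i0, g \<alpha>)\<in>t \<and> g \<alpha> \<noteq> i0} \<in> I"
      using LA'[of g] gA by blast
    obtain i1 where i1: "i1 \<in> Field t" "i0 \<noteq> i1" "(i0,i1) \<in> t" using t_nomax[OF tc tinf treg] i0 by blast
    have "A i1 \<subseteq> {\<alpha>\<in>Field k. (i0, g \<alpha>)\<in>t \<and> g \<alpha> \<noteq> i0}"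
    proof
      fix \<alpha> assume a: "\<alpha> \<in> A i1"
      then have ak: "\<alpha> \<in> Field k" using A1 i1 by blast
      have "g \<alpha> = i1" using gA[OF ak] A2 i1 a by blast
      then show "\<alpha> \<in> {\<alpha>\<in>Field k. (i0, g \<alpha>)\<in>t \<and> g \<alpha> \<noteq> i0}" using ak i1 by auto
    qed
    then show False using i0 i1 A1 Icl by blast
  qed
  have ind: "indecomposable k t I"
    unfolding indecomposable_def
  proof (intro allI impI)
    fix A :: "'b \<Rightarrow> 'a set"
    assume "(\<forall>i\<in>Field t. A i \<subseteq> Field k) \<and> (\<Union>i\<in>Field t. A i) \<notin> I"
    then have A1: "\<forall>i\<in>Field t. A i \<subseteq> Field k" and A2: "(\<Union>i\<in>Field t. A i) \<notin> I" by auto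
    show "\<exists>w\<subseteq>Field t. |w| <o t \<and> (\<Union>i\<in>w. A i) \<notin> I"
    proof (rule ccontr)
      assume N: "\<not> ?thesis"
      let ?X = "\<Union>i\<in>Field t. A i"
      obtain z where z: "z \<in> Field t" using tinf unfolding cinfinite_def by (metis finite.emptyI ex_in_conv)
      define g where "g \<alpha> = (if \<alpha> \<in> ?X then (SOME i. i \<in> Field t \<and> \<alpha> \<in> A i) else z)" for \<alpha>
      have gA: "g \<alpha> \<in> Field t \<and> \<alpha> \<in> A (g \<alpha>)" if "\<alpha> \<in> ?X" for \<alpha>
      proof -
        have "\<exists>i. i \<in> Field t \<and> \<alpha> \<in> A i" using that by blast
        then have "(SOME i. i \<in> Field t \<and> \<alpha> \<in> A i) \<in> Field t \<and> \<alpha> \<in> A (SOME i. i \<in> Field t \<and> \<alpha> \<in> A i)" by (rule someI_ex)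
        then show ?thesis unfolding g_def using that by simp
      qed
      have gF: "\<forall>\<alpha>\<in>Field k. g \<alpha> \<in> Field t" using gA z by (auto simp: g_def)
      obtain i0 where i0: "i0 \<in> Field t" "{\<alpha>\<in>Field k. (i0, g \<alpha>)\<in>t \<and> g \<alpha> \<noteq> i0} \<in> I"
        using LA'[of g] gF by blast
      have "under t i0 \<subseteq> Field t" by (auto simp: under_def Field_def)
      then have "(\<Union>i\<in>under t i0. A i) \<in> I" using N t_under[OF tc tinf treg i0(1)] by blast
      moreover have "?X \<subseteq> (\<Union>i\<in>under t i0. A i) \<union> {\<alpha>\<in>Field k. (i0, g \<alpha>)\<in>t \<and> g \<alpha> \<noteq> i0}"
      proof
        fix \<alpha> assume a: "\<alpha> \<in> ?X"
        then have ak: "\<alpha> \<in> Field k" using A1 by blast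
        show "\<alpha> \<in> (\<Union>i\<in>under t i0. A i) \<union> {\<alpha>\<in>Field k. (i0, g \<alpha>)\<in>t \<and> g \<alpha> \<noteq> i0}"
        proof (cases "(g \<alpha>, i0) \<in> t")
          case True then show ?thesis using gA[OF a] by (auto simp: under_def)
        next
          case False
          then have "(i0, g \<alpha>) \<in> t" "g \<alpha> \<noteq> i0"
            using t_total[OF tc tinf treg] t_refl[OF tc tinf treg] gA[OF a] i0(1) by blast+
          then show ?thesis using ak by auto
        qed
      qed
      ultimately show False using A2 i0 Icl Iun by blast
    qed
  qed
  show ?thesis using ws ind by blast
qed



lemma dir12:
  fixes k :: "'a rel" and t :: "'b rel" and I :: "'a set set"
    and S :: "'a \<Rightarrow> 'o::wellorder set" and h :: "'b \<Rightarrow> 'a \<Rightarrow> 'o"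
  assumes ideal: "ideal_on k I"
    and tc: "Card_order t" and tinf: "cinfinite t"
    and treg: "regularCard t"
    and WS: "weakly_saturated k t I" and IND: "indecomposable k t I"
    and hS: "\<forall>\<alpha>\<in>Field k. |S \<alpha>| <o t"
    and hin: "\<forall>i\<in>Field t. \<forall>\<alpha>\<in>Field k. h i \<alpha> \<in> S \<alpha>"
    and hmono: "\<forall>i\<in>Field t. \<forall>j\<in>Field t. (i, j) \<in> t \<and> i \<noteq> j \<longrightarrow>
          (\<forall>\<alpha>\<in>Field k. h i \<alpha> \<le> h j \<alpha>)"
  shows "\<exists>i0\<in>Field t. \<forall>i\<in>Field t. (i0, i) \<in> t \<longrightarrow>
          {\<alpha>\<in>Field k. h i \<alpha> \<noteq> h i0 \<alpha>} \<in> I"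
proof (rule ccontr)
  assume N: "\<not> ?thesis"
  note refl = t_refl[OF tc tinf treg] and trans = t_trans[OF tc tinf treg]
    and antis = t_antisym[OF tc tinf treg] and total = t_total[OF tc tinf treg]
  have Icl: "\<forall>A\<in>I. \<forall>B. B \<subseteq> A \<longrightarrow> B \<in> I" using ideal by (auto simp: ideal_on_def)
  have Fne: "Field t \<noteq> {}" using tinf unfolding cinfinite_def by (metis finite.emptyI)
  have mono: "h i \<alpha> \<le> h j \<alpha>" if "(i,j) \<in> t" "\<alpha> \<in> Field k" for i j \<alpha>
  proof -
    have "i \<in> Field t" "j \<in> Field t" using that by (auto intro: FieldI1 FieldI2)
    then show ?thesis using hmono that by (cases "i = j") auto
  qed
  have stab: "\<exists>\<beta>\<in>Field t. \<forall>i\<in>Field t. (\<beta>,i)\<in>t \<longrightarrow> h i \<alpha> = h \<beta> \<alpha>" if ak: "\<alpha> \<in> Field k" for \<alpha>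
  proof -
    let ?V = "(\<lambda>i. h i \<alpha>) ` Field t"
    define c where "c v = (SOME i. i \<in> Field t \<and> h i \<alpha> = v)" for v
    have cv: "c v \<in> Field t \<and> h (c v) \<alpha> = v" if "v \<in> ?V" for v
    proof -
      have "\<exists>i. i \<in> Field t \<and> h i \<alpha> = v" using that by blast
      then show ?thesis unfolding c_def by (rule someI_ex)
    qed
    have "?V \<subseteq> S \<alpha>" using hin ak by blast
    then have "|c ` ?V| <o t"
      using card_of_image card_of_mono1 hS ak ordLeq_transitive ordLeq_ordLess_trans by metis
    moreover have "c ` ?V \<subseteq> Field t" using cv by blast
    ultimately obtain a where a: "a \<in> Field t" "\<forall>b\<in>c ` ?V. (b,a) \<in> t"
      using t_bound[OF tc tinf treg] by blast
    have "\<forall>i\<in>Field t. (a,i)\<in>t \<longrightarrow> h i \<alpha> = h a \<alpha>"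
    proof (intro ballI impI)
      fix i assume i: "i \<in> Field t" "(a,i) \<in> t"
      let ?v = "h i \<alpha>"
      have v: "?v \<in> ?V" using i by blast
      have "h (c ?v) \<alpha> \<le> h a \<alpha>" using mono a v ak by blast
      moreover have "h a \<alpha> \<le> h i \<alpha>" using mono i ak by blast
      ultimately show "h i \<alpha> = h a \<alpha>" using cv[OF v] by auto
    qed
    then show ?thesis using a by blast
  qed
  define g where "g \<alpha> = (SOME \<beta>. \<beta>\<in>Field t \<and> (\<forall>i\<in>Field t. (\<beta>,i)\<in>t \<longrightarrow> h i \<alpha> = h \<beta> \<alpha>))" for \<alpha>
  have gp: "g \<alpha> \<in> Field t \<and> (\<forall>i\<in>Field t. (g \<alpha>,i)\<in>t \<longrightarrow> h i \<alpha> = h (g \<alpha>) \<alpha>)" if "\<alpha> \<in> Field k" for \<alpha>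
  proof -
    have "\<exists>\<beta>. \<beta>\<in>Field t \<and> (\<forall>i\<in>Field t. (\<beta>,i)\<in>t \<longrightarrow> h i \<alpha> = h \<beta> \<alpha>)" using stab[OF that] by blast
    then show ?thesis unfolding g_def by (rule someI_ex)
  qed
  define B where "B x = {\<alpha>\<in>Field k. (x, g \<alpha>)\<in>t \<and> g \<alpha> \<noteq> x}" for x
  have Bpos: "B x \<notin> I" if x: "x \<in> Field t" for x
  proof -
    obtain i where i: "i \<in> Field t" "(x,i) \<in> t" "{\<alpha>\<in>Field k. h i \<alpha> \<noteq> h x \<alpha>} \<notin> I"
      using N x by blast
    have "{\<alpha>\<in>Field k. h i \<alpha> \<noteq> h x \<alpha>} \<subseteq> B x"
    proof safe
      fix \<alpha> assume a: "\<alpha> \<in> Field k" "h i \<alpha> \<noteq> h x \<alpha>"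
      show "\<alpha> \<in> B x"
      proof (rule ccontr)
        assume "\<alpha> \<notin> B x"
        then have "(g \<alpha>, x) \<in> t" using a gp[OF a(1)] total refl x unfolding B_def by blast
        then have "h x \<alpha> = h (g \<alpha>) \<alpha>" "h i \<alpha> = h (g \<alpha>) \<alpha>" using gp[OF a(1)] x i trans by blast+
        then show False using a by simp
      qed
    qed
    then show ?thesis using i Icl by blast
  qed
  define P where "P x b = {\<alpha>\<in>Field k. (x, g \<alpha>)\<in>t \<and> g \<alpha> \<noteq> x \<and> (g \<alpha>, b) \<in> t}" for x b
  have fex: "\<exists>b\<in>Field t. P x b \<notin> I" if x: "x \<in> Field t" for x
  proof -
    define A where "A j = {\<alpha>\<in>Field k. g \<alpha> = j \<and> (x, j)\<in>t \<and> j \<noteq> x}" for j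
    have "(\<Union>j\<in>Field t. A j) = B x" using gp unfolding A_def B_def by blast
    then have "(\<forall>i\<in>Field t. A i \<subseteq> Field k) \<and> (\<Union>i\<in>Field t. A i) \<notin> I"
      using Bpos[OF x] unfolding A_def by auto
    then obtain w where w: "w \<subseteq> Field t" "|w| <o t" "(\<Union>i\<in>w. A i) \<notin> I"
      using IND unfolding indecomposable_def by blast
    obtain b where b: "b \<in> Field t" "\<forall>j\<in>w. (j,b) \<in> t" using t_bound[OF tc tinf treg w(1,2)] by blast
    have "(\<Union>i\<in>w. A i) \<subseteq> P x b" using b unfolding A_def P_def by blast
    then have "P x b \<notin> I" using w(3) Icl by blast
    then show ?thesis using b by blast
  qed
  define f where "f x = (SOME b. b\<in>Field t \<and> P x b \<notin> I)" for x
  have fp: "f x \<in> Field t \<and> P x (f x) \<notin> I" if "x \<in> Field t" for x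
  proof -
    have "\<exists>b. b\<in>Field t \<and> P x b \<notin> I" using fex[OF that] by blast
    then show ?thesis unfolding f_def by (rule someI_ex)
  qed
  define \<A> where "\<A> = {X. X \<subseteq> Field t \<and> (\<forall>x\<in>X. \<forall>y\<in>X. (x,y)\<in>t \<and> x\<noteq>y \<longrightarrow> (f x, y)\<in>t)}"
  have "\<forall>C\<in>chains \<A>. \<Union>C \<in> \<A>"
  proof
    fix C assume C: "C \<in> chains \<A>"
    then have CA: "C \<subseteq> \<A>" and ch: "\<forall>X\<in>C. \<forall>Y\<in>C. X \<subseteq> Y \<or> Y \<subseteq> X"
      unfolding chains_def chain_subset_def by blast+
    show "\<Union>C \<in> \<A>"
      unfolding \<A>_def
    proof (intro CollectI conjI ballI impI)
      show "\<Union>C \<subseteq> Field t" using CA unfolding \<A>_def by blast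
    next
      fix x y assume xy: "x \<in> \<Union>C" "y \<in> \<Union>C" "(x,y)\<in>t \<and> x\<noteq>y"
      then obtain X Y where XY: "X \<in> C" "Y \<in> C" "x \<in> X" "y \<in> Y" by blast
      then have "\<exists>Z\<in>C. x \<in> Z \<and> y \<in> Z" using ch by blast
      then show "(f x, y) \<in> t" using CA xy unfolding \<A>_def by blast
    qed
  qed
  then obtain M where M: "M \<in> \<A>" and Mmax: "\<forall>X\<in>\<A>. M \<subseteq> X \<longrightarrow> X = M"
    using Zorn_Lemma by blast
  have MF: "M \<subseteq> Field t" using M unfolding \<A>_def by blast
  have Msep: "\<And>x y. x \<in> M \<Longrightarrow> y \<in> M \<Longrightarrow> (x,y)\<in>t \<Longrightarrow> x\<noteq>y \<Longrightarrow> (f x, y)\<in>t"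
    using M unfolding \<A>_def by blast
  have Mbig: "\<not> |M| <o t"
  proof
    assume Ms: "|M| <o t"
    let ?K = "M \<union> f ` M"
    have "|f ` M| <o t" using card_of_image Ms ordLeq_ordLess_trans by blast
    then have "|?K| <o t" using t_small_un[OF tc tinf treg] Ms by blast
    moreover have "?K \<subseteq> Field t" using MF fp by blast
    ultimately obtain y where y: "y \<in> Field t" "\<forall>b\<in>?K. (b,y)\<in>t \<and> b \<noteq> y"
      using t_sbound[OF tc tinf treg] by blast
    have "insert y M \<in> \<A>"
      unfolding \<A>_def
    proof (intro CollectI conjI ballI impI)
      show "insert y M \<subseteq> Field t" using MF y by blast
    next
      fix a b assume ab: "a \<in> insert y M" "b \<in> insert y M" "(a,b)\<in>t \<and> a\<noteq>b"
      show "(f a, b) \<in> t"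
      proof (cases "a = y")
        case True
        then have "b \<in> M" using ab by auto
        then have "(b, y) \<in> t" using y by blast
        then show ?thesis using ab True antis by blast
      next
        case False
        then have aM: "a \<in> M" using ab by auto
        show ?thesis
        proof (cases "b = y")
          case True then show ?thesis using y aM by blast
        next
          case False then show ?thesis using ab aM Msep by blast
        qed
      qed
    qed
    moreover have "y \<notin> M" using y by blast
    ultimately show False using Mmax by blast
  qed
  have FtM: "|Field t| =o |M|"
  proof -
    have "|M| \<le>o |Field t|" using MF card_of_mono1 by blast
    moreover have "|Field t| =o t" using card_of_Field_ordIso tc by blast
    moreover have "\<not> |M| <o |Field t|" using Mbig calculation(2) ordLess_ordIso_trans by blast
    ultimately show ?thesis
      using ordLeq_iff_ordLess_or_ordIso ordIso_symmetric by blast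
  qed
  then obtain \<phi> where \<phi>: "bij_betw \<phi> (Field t) M" using card_of_ordIso by blast
  have Pdisj: "P x (f x) \<inter> P y (f y) = {}" if "x \<in> M" "y \<in> M" "x \<noteq> y" for x y
  proof -
    have "P x (f x) \<inter> P y (f y) = {}" if xy: "x \<in> M" "y \<in> M" "x \<noteq> y" "(x,y) \<in> t" for x y
    proof (rule ccontr)
      assume "P x (f x) \<inter> P y (f y) \<noteq> {}"
      then obtain \<alpha> where a: "(g \<alpha>, f x) \<in> t" "(y, g \<alpha>) \<in> t" "g \<alpha> \<noteq> y" unfolding P_def by blast
      have "(f x, y) \<in> t" using Msep xy by blast
      then have "(g \<alpha>, y) \<in> t" using a trans by blast
      then show False using a antis by blast
    qed
    moreover have "x \<in> Field t" "y \<in> Field t" using that MF by auto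
    ultimately show ?thesis using that total by blast
  qed
  obtain z where z: "z \<in> Field t" using Fne by blast
  define R where "R = Field k - (\<Union>x\<in>M. P x (f x))"
  define A where "A i = P (\<phi> i) (f (\<phi> i)) \<union> (if i = z then R else {})" for i
  have \<phi>M: "\<phi> i \<in> M" if "i \<in> Field t" for i using \<phi> that by (auto simp: bij_betw_def)
  have \<phi>inj: "\<phi> i \<noteq> \<phi> j" if "i \<in> Field t" "j \<in> Field t" "i \<noteq> j" for i j
    using \<phi> that by (auto simp: bij_betw_def inj_on_def)
  have "\<exists>A :: 'b \<Rightarrow> 'a set.
          (\<forall>i\<in>Field t. A i \<subseteq> Field k \<and> A i \<notin> I) \<and>
          (\<forall>i\<in>Field t. \<forall>j\<in>Field t. i \<noteq> j \<longrightarrow> A i \<inter> A j = {}) \<and>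
          (\<Union>i\<in>Field t. A i) = Field k"
  proof (intro exI conjI ballI impI)
    fix i assume i: "i \<in> Field t"
    show "A i \<subseteq> Field k" unfolding A_def P_def R_def by auto
    have "P (\<phi> i) (f (\<phi> i)) \<notin> I" using fp \<phi>M[OF i] MF by blast
    moreover have "P (\<phi> i) (f (\<phi> i)) \<subseteq> A i" unfolding A_def by blast
    ultimately show "A i \<notin> I" using Icl by blast
  next
    fix i j assume ij: "i \<in> Field t" "j \<in> Field t" "i \<noteq> j"
    have d: "P (\<phi> i) (f (\<phi> i)) \<inter> P (\<phi> j) (f (\<phi> j)) = {}" using Pdisj \<phi>M \<phi>inj ij by blast
    have "P (\<phi> i) (f (\<phi> i)) \<inter> R = {}" "P (\<phi> j) (f (\<phi> j)) \<inter> R = {}"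
      using \<phi>M ij unfolding R_def by blast+
    then show "A i \<inter> A j = {}" using d ij unfolding A_def by auto
  next
    show "(\<Union>i\<in>Field t. A i) = Field k"
    proof
      show "(\<Union>i\<in>Field t. A i) \<subseteq> Field k" unfolding A_def P_def R_def by (auto split: if_splits)
    next
      show "Field k \<subseteq> (\<Union>i\<in>Field t. A i)"
      proof
        fix \<alpha> assume a: "\<alpha> \<in> Field k"
        show "\<alpha> \<in> (\<Union>i\<in>Field t. A i)"
        proof (cases "\<alpha> \<in> R")
          case True then show ?thesis using z unfolding A_def by auto
        next
          case False
          then obtain x where x: "x \<in> M" "\<alpha> \<in> P x (f x)" using a unfolding R_def by blast
          then obtain i where "i \<in> Field t" "\<phi> i = x" using \<phi> by (auto simp: bij_betw_def)
          then show ?thesis using x unfolding A_def by blast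
        qed
      qed
    qed
  qed
  then show False using WS unfolding weakly_saturated_def by blast
qed


theorem proposition2p4:
  fixes k :: "'a rel" and t :: "'b rel" and I :: "'a set set"
  assumes kappa: "Card_order k"
    and ideal: "ideal_on k I"
    and theta_card: "Card_order t" and theta_inf: "cinfinite t"
    and theta_regular: "regularCard t"
    and theta_less: "t <o k"
    and ordinals_big: "|Field k| <o |UNIV :: 'o::wellorder set|"
  shows "(weakly_saturated k t I \<and> indecomposable k t I) \<longleftrightarrow>
    (\<forall>(S :: 'a \<Rightarrow> 'o set) (h :: 'b \<Rightarrow> 'a \<Rightarrow> 'o).
       (\<forall>\<alpha>\<in>Field k. |S \<alpha>| <o t) \<and>
       (\<forall>i\<in>Field t. \<forall>\<alpha>\<in>Field k. h i \<alpha> \<in> S \<alpha>) \<and>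
       (\<forall>i\<in>Field t. \<forall>j\<in>Field t. (i, j) \<in> t \<and> i \<noteq> j \<longrightarrow>
          (\<forall>\<alpha>\<in>Field k. h i \<alpha> \<le> h j \<alpha>))
       \<longrightarrow>
       (\<exists>i0\<in>Field t. \<forall>i\<in>Field t. (i0, i) \<in> t \<longrightarrow>
          {\<alpha>\<in>Field k. h i \<alpha> \<noteq> h i0 \<alpha>} \<in> I))"
proof
  assume "weakly_saturated k t I \<and> indecomposable k t I"
  then show "\<forall>(S :: 'a \<Rightarrow> 'o set) (h :: 'b \<Rightarrow> 'a \<Rightarrow> 'o).
       (\<forall>\<alpha>\<in>Field k. |S \<alpha>| <o t) \<and>
       (\<forall>i\<in>Field t. \<forall>\<alpha>\<in>Field k. h i \<alpha> \<in> S \<alpha>) \<and>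
       (\<forall>i\<in>Field t. \<forall>j\<in>Field t. (i, j) \<in> t \<and> i \<noteq> j \<longrightarrow>
          (\<forall>\<alpha>\<in>Field k. h i \<alpha> \<le> h j \<alpha>))
       \<longrightarrow>
       (\<exists>i0\<in>Field t. \<forall>i\<in>Field t. (i0, i) \<in> t \<longrightarrow>
          {\<alpha>\<in>Field k. h i \<alpha> \<noteq> h i0 \<alpha>} \<in> I)"
    using dir12[OF ideal theta_card theta_inf theta_regular] by blast
next
  assume H: "\<forall>(S :: 'a \<Rightarrow> 'o set) (h :: 'b \<Rightarrow> 'a \<Rightarrow> 'o).
       (\<forall>\<alpha>\<in>Field k. |S \<alpha>| <o t) \<and>
       (\<forall>i\<in>Field t. \<forall>\<alpha>\<in>Field k. h i \<alpha> \<in> S \<alpha>) \<and>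
       (\<forall>i\<in>Field t. \<forall>j\<in>Field t. (i, j) \<in> t \<and> i \<noteq> j \<longrightarrow>
          (\<forall>\<alpha>\<in>Field k. h i \<alpha> \<le> h j \<alpha>))
       \<longrightarrow>
       (\<exists>i0\<in>Field t. \<forall>i\<in>Field t. (i0, i) \<in> t \<longrightarrow>
          {\<alpha>\<in>Field k. h i \<alpha> \<noteq> h i0 \<alpha>} \<in> I)"
  show "weakly_saturated k t I \<and> indecomposable k t I"
    by (rule dir21[OF kappa ideal theta_card theta_inf theta_regular theta_less ordinals_big H])
qed

end
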